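(* Let $X$ be a real Banach space with $\dim X\ge 2$. Then $S_P(X)<\tfrac12$ if and only if $X$ is uniformly non-square.
   Context: For a real Banach space $X$ with unit sphere $S_X$, the P-angle constant is $S_P(X)=\sup\left\{\frac{\|x+y\|^2+\|x-y\|^2-4}{2\|x+y\|\,\|x-y\|}: x,y\in S_X,\ x\neq \pm y\right\}$. $X$ is uniformly non-square if there exists $\delta\in(0,1)$ such that for all $x,y\in S_X$, either $\frac{\|x-y\|}{2}\le 1-\delta$ or $\frac{\|x+y\|}{2}\le 1-\delta$. *)

theory Defs
  imports "HOL-Analysis.Analysis"
begin

definition unit_sphere :: "'a::real_normed_vector set" where
  "unit_sphere = {x. norm x = 1}"

definition P_angle_const :: "'a::real_normed_vector itself \<Rightarrow> real" where
  "P_angle_const (_::'a itself) =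
     Sup {(norm (x + y)^2 + norm (x - y)^2 - 4) / (2 * norm (x + y) * norm (x - y)) | x y :: 'a.
            x \<in> unit_sphere \<and> y \<in> unit_sphere \<and> x \<noteq> y \<and> x \<noteq> - y}"

definition uniformly_non_square :: "'a::real_normed_vector itself \<Rightarrow> bool" where
  "uniformly_non_square (_::'a itself) \<longleftrightarrow>
     (\<exists>\<delta>::real. 0 < \<delta> \<and> \<delta> < 1 \<and>
        (\<forall>x y :: 'a. x \<in> unit_sphere \<longrightarrow> y \<in> unit_sphere \<longrightarrow>
           norm (x - y) / 2 \<le> 1 - \<delta> \<or> norm (x + y) / 2 \<le> 1 - \<delta>))"

text \<open>dim X \<ge> 2 (possibly infinite): there are two linearly independent vectors.\<close>
definition dim_ge_2 :: "'a::real_vector itself \<Rightarrow> bool" where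
  "dim_ge_2 (_::'a itself) \<longleftrightarrow> (\<exists>x y :: 'a. x \<noteq> y \<and> independent {x, y})"

end

theory Submission
  imports Defs
begin

lemma key:
  fixes a b :: real
  assumes "0 < a" "0 < b" "a \<le> 2" "b \<le> 2"
  shows "(a^2+b^2-4)/(2*a*b) \<le> b/4"
proof -
  have "(a-2)*(2*a+4-b^2) \<le> 0"
  proof (rule mult_nonpos_nonneg)
    show "a - 2 \<le> 0" using assms by simp
    have "b^2 \<le> 2^2" using assms by (intro power_mono) auto
    then show "0 \<le> 2*a+4-b^2" using assms by simp
  qed
  then have "2*(a^2+b^2-4) \<le> a*b^2" by (simp add: algebra_simps power2_eq_square)
  then show ?thesis using assms by (simp add: divide_le_eq power2_eq_square algebra_simps)
qed

lemma key2:
  fixes x y :: "'a::real_normed_vector"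
  assumes "norm x = 1" "norm y = 1" "x \<noteq> y" "x \<noteq> - y"
  shows "(norm (x + y)^2 + norm (x - y)^2 - 4) / (2 * norm (x + y) * norm (x - y))
         \<le> min (norm (x+y)) (norm (x-y)) / 4"
proof -
  have a2: "norm (x+y) \<le> 2" using norm_triangle_ineq[of x y] assms by simp
  have b2: "norm (x-y) \<le> 2" using norm_triangle_ineq4[of x y] assms by simp
  have a0: "0 < norm (x+y)" proof -
    have "x + y \<noteq> 0" using assms(4) by (simp add: add_eq_0_iff2)
    then show ?thesis by simp
  qed
  have b0: "0 < norm (x-y)" using assms by simp
  have 1: "(norm (x + y)^2 + norm (x - y)^2 - 4) / (2 * norm (x + y) * norm (x - y)) \<le> norm (x-y)/4"
    using key[OF a0 b0 a2 b2] .
  have 2: "(norm (x + y)^2 + norm (x - y)^2 - 4) / (2 * norm (x + y) * norm (x - y)) \<le> norm (x+y)/4"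
    using key[OF b0 a0 b2 a2] by (simp add: add.commute mult.commute mult.left_commute)
  show ?thesis using 1 2 by simp
qed

theorem theorem5p1:
  assumes "dim_ge_2 TYPE('a::banach)"
  shows "P_angle_const TYPE('a) < 1/2 \<longleftrightarrow> uniformly_non_square TYPE('a)"
proof -
  define F where "F = (\<lambda>x y::'a. (norm (x + y)^2 + norm (x - y)^2 - 4) / (2 * norm (x + y) * norm (x - y)))"
  define A where "A = {F x y | x y :: 'a.
            x \<in> unit_sphere \<and> y \<in> unit_sphere \<and> x \<noteq> y \<and> x \<noteq> - y}"
  have S: "P_angle_const TYPE('a) = Sup A" unfolding P_angle_const_def A_def F_def by simp
  have bnd: "\<And>z. z \<in> A \<Longrightarrow> z \<le> 1/2"
  proof -
    fix z assume "z \<in> A"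
    then obtain x y where xy: "z = F x y" "norm x = 1" "norm y = 1" "x \<noteq> y" "x \<noteq> -y"
      unfolding A_def unit_sphere_def by auto
    have "norm (x-y) \<le> 2" using norm_triangle_ineq4[of x y] xy by simp
    then show "z \<le> 1/2" using key2[OF xy(2-5)] xy(1) unfolding F_def by linarith
  qed
  have bdd: "bdd_above A" using bnd by (intro bdd_aboveI[where M="1/2"]) blast
  have ne: "A \<noteq> {}"
  proof -
    obtain x y :: 'a where xy: "x \<noteq> y" "independent {x, y}"
      using assms unfolding dim_ge_2_def by blast
    have x0: "x \<noteq> 0" and y0: "y \<noteq> 0" using xy(2) dependent_zero by auto
    define u where "u = x /\<^sub>R norm x"
    define v where "v = y /\<^sub>R norm y"
    have nu: "norm u = 1" "norm v = 1" using x0 y0 unfolding u_def v_def by auto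
    have uv: "u \<noteq> v \<and> u \<noteq> - v"
    proof (rule ccontr)
      assume "\<not> ?thesis"
      then have "u = v \<or> u = - v" by blast
      then obtain c where c: "y = c *\<^sub>R x"
      proof
        assume "u = v"
        have "y = norm y *\<^sub>R v" using y0 by (simp add: v_def)
        also have "\<dots> = norm y *\<^sub>R u" using \<open>u = v\<close> by simp
        also have "\<dots> = (norm y / norm x) *\<^sub>R x" by (simp add: u_def divide_inverse_commute)
        finally show ?thesis using that by blast
      next
        assume "u = - v"
        have "y = norm y *\<^sub>R v" using y0 by (simp add: v_def)
        also have "\<dots> = - (norm y *\<^sub>R u)" using \<open>u = - v\<close> by simp
        also have "\<dots> = (- norm y / norm x) *\<^sub>R x" by (simp add: u_def divide_inverse_commute)
        finally show ?thesis using that by blast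
      qed
      have "y \<in> span ({x,y} - {y})" using xy(1) c by (simp add: span_base span_mul)
      then have "dependent {x,y}" unfolding dependent_def by blast
      then show False using xy(2) by simp
    qed
    then have "F u v \<in> A" unfolding A_def unit_sphere_def using nu by blast
    then show ?thesis by blast
  qed
  show ?thesis
  proof
    assume lt: "P_angle_const TYPE('a) < 1/2"
    define s where "s = Sup A"
    have slt: "s < 1/2" using lt S s_def by simp
    define d where "d = min (1/8) ((1/2 - s)/4)"
    have d0: "0 < d" "d \<le> 1/8" "d \<le> (1/2 - s)/4" using slt unfolding d_def by (auto simp: min_def)
    show "uniformly_non_square TYPE('a)"
      unfolding uniformly_non_square_def
    proof (intro exI[of _ d] conjI allI impI)
      show "0 < d" "d < 1" using d0 by auto
      fix x y :: 'a assume x: "x \<in> unit_sphere" and y: "y \<in> unit_sphere"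
      show "norm (x - y) / 2 \<le> 1 - d \<or> norm (x + y) / 2 \<le> 1 - d"
      proof (rule ccontr)
        assume "\<not> ?thesis"
        then have ab: "norm (x-y) > 2 - 2*d" "norm (x+y) > 2 - 2*d" by auto
        have nx: "norm x = 1" "norm y = 1" using x y unfolding unit_sphere_def by auto
        have a2: "norm (x+y) \<le> 2" using norm_triangle_ineq[of x y] nx by simp
        have b2: "norm (x-y) \<le> 2" using norm_triangle_ineq4[of x y] nx by simp
        have pos: "2 - 2*d > 0" using d0 by simp
        have "x \<noteq> y" using ab pos by auto
        moreover have "x \<noteq> -y" using ab pos by auto
        ultimately have "F x y \<in> A" unfolding A_def using x y by blast
        then have le: "F x y \<le> s" unfolding s_def using bdd by (simp add: cSup_upper)
        define a where "a = norm (x+y)"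
        define b where "b = norm (x-y)"
        have a: "a > 2 - 2*d" "a \<le> 2" and b: "b > 2 - 2*d" "b \<le> 2"
          using ab a2 b2 unfolding a_def b_def by auto
        have sq: "(2-2*d)^2 \<le> a^2" "(2-2*d)^2 \<le> b^2"
          using a b pos by (auto intro!: power_mono)
        have "(2-2*d)^2 \<ge> 4 - 8*d" by (simp add: power2_eq_square algebra_simps)
        then have N: "a^2+b^2-4 \<ge> 4 - 16*d" using sq by linarith
        have Npos: "a^2+b^2-4 > 0" using N d0 by linarith
        have "a*b \<le> 2*2" using a b pos by (intro mult_mono) auto
        then have ab8: "2*a*b \<le> 8" by simp
        have abp: "2*a*b > 0" using a b pos by simp
        have "(a^2+b^2-4)/8 \<le> (a^2+b^2-4)/(2*a*b)"
          using Npos ab8 abp by (intro divide_left_mono) auto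
        moreover have "F x y = (a^2+b^2-4)/(2*a*b)" unfolding F_def a_def b_def by simp
        ultimately have "F x y \<ge> (4 - 16*d)/8" using N by (simp add: divide_right_mono order_trans)
        then show False using le d0 slt by (simp add: field_simps)
      qed
    qed
  next
    assume "uniformly_non_square TYPE('a)"
    then obtain d :: real where d: "0 < d" "d < 1" and
      H: "\<forall>x y :: 'a. x \<in> unit_sphere \<longrightarrow> y \<in> unit_sphere \<longrightarrow>
           norm (x - y) / 2 \<le> 1 - d \<or> norm (x + y) / 2 \<le> 1 - d"
      unfolding uniformly_non_square_def by blast
    have "Sup A \<le> (1 - d)/2"
    proof (rule cSup_least[OF ne])
      fix z assume "z \<in> A"
      then obtain x y where xy: "z = F x y" "norm x = 1" "norm y = 1" "x \<noteq> y" "x \<noteq> -y"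
        and xs: "x \<in> unit_sphere" "y \<in> unit_sphere"
        unfolding A_def unit_sphere_def by auto
      have "min (norm (x+y)) (norm (x-y)) \<le> 2 - 2*d" using H xs by fastforce
      then have m: "min (norm (x+y)) (norm (x-y)) / 4 \<le> (1-d)/2" by simp
      show "z \<le> (1-d)/2" using order_trans[OF key2[OF xy(2-5)] m] xy(1) unfolding F_def by simp
    qed
    then show "P_angle_const TYPE('a) < 1/2" proof -
      have "(1 - d) / 2 < 1/2" using d by simp
      then show ?thesis using S \<open>Sup A \<le> (1 - d)/2\<close> by linarith
    qed
  qed
qed

end
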